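(* Let $(X,Y)$ be a pair of continuous random variables with joint distribution function $H$, marginal distribution functions $F$ (of $X$) and $G$ (of $Y$), and copula $C$, so that $H(x,y)=C(F(x),G(y))$. For $p,q\in[0,1]$ define $$\lambda_{Y|X}(q|p)=\lim_{t\to 0^+} P\{G^{-1}((q-t)^+)<Y\le G^{-1}((q+t)^-)\mid F^{-1}((p-t)^+)<X\le F^{-1}((p+t)^-)\},$$ $$\lambda_{X|Y}(p|q)=\lim_{t\to 0^+} P\{F^{-1}((p-t)^+)<X\le F^{-1}((p+t)^-)\mid G^{-1}((q-t)^+)<Y\le G^{-1}((q+t)^-)\}.$$ Then for $p,q\in[0,1]$, $$\lambda_{Y|X}(q|p)=\lim_{t\to0^+}\frac{V_C([(p-t)^+,(p+t)^-]\times[(q-t)^+,(q+t)^-])}{(p+t)^- - (p-t)^+},\qquad \lambda_{X|Y}(p|q)=\lim_{t\to0^+}\frac{V_C([(p-t)^+,(p+t)^-]\times[(q-t)^+,(q+t)^-])}{(q+t)^- - (q-t)^+},$$ provided the limits exist.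
   Context: For real $a$, $a^+=\max(a,0)$ and $a^-=1-(1-a)^+$. For a distribution function $F$, $F^{-1}(u)=\inf\{x\in\mathbb{R}:F(x)\ge u\}$ is its generalized inverse (quantile function). A copula is a bivariate distribution function on $[0,1]^2$ with uniform$(0,1)$ margins. For $0\le u_1\le u_2\le1$, $0\le v_1\le v_2\le 1$, the $C$-volume is $V_C([u_1,u_2]\times[v_1,v_2])=C(u_2,v_2)-C(u_2,v_1)-C(u_1,v_2)+C(u_1,v_1)$. *)

theory Defs
  imports "HOL-Probability.Probability"
begin

definition pos_part :: "real \<Rightarrow> real" where
  "pos_part a = max a 0"

definition neg_part :: "real \<Rightarrow> real" where
  "neg_part a = 1 - pos_part (1 - a)"

text \<open>Generalized inverse, valued in the extended reals (so that the infimum of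
  all reals is -infinity and the infimum of the empty set is +infinity).\<close>
definition quantile :: "(real \<Rightarrow> real) \<Rightarrow> real \<Rightarrow> ereal" where
  "quantile F u = Inf {ereal x | x. F x \<ge> u}"

definition is_copula :: "(real \<Rightarrow> real \<Rightarrow> real) \<Rightarrow> bool" where
  "is_copula C \<longleftrightarrow>
     (\<forall>u\<in>{0..1}. C u 0 = 0 \<and> C 0 u = 0 \<and> C u 1 = u \<and> C 1 u = u) \<and>
     (\<forall>u1 u2 v1 v2. 0 \<le> u1 \<longrightarrow> u1 \<le> u2 \<longrightarrow> u2 \<le> 1 \<longrightarrow> 0 \<le> v1 \<longrightarrow> v1 \<le> v2 \<longrightarrow> v2 \<le> 1 \<longrightarrow>
        C u2 v2 - C u2 v1 - C u1 v2 + C u1 v1 \<ge> 0)"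

definition C_volume :: "(real \<Rightarrow> real \<Rightarrow> real) \<Rightarrow> real \<Rightarrow> real \<Rightarrow> real \<Rightarrow> real \<Rightarrow> real" where
  "C_volume C u1 u2 v1 v2 = C u2 v2 - C u2 v1 - C u1 v2 + C u1 v1"

definition cond_prob :: "'a measure \<Rightarrow> 'a set \<Rightarrow> 'a set \<Rightarrow> real" where
  "cond_prob M A B = measure M (A \<inter> B) / measure M B"

definition qevent :: "'a measure \<Rightarrow> ('a \<Rightarrow> real) \<Rightarrow> (real \<Rightarrow> real) \<Rightarrow> real \<Rightarrow> real \<Rightarrow> 'a set" where
  "qevent M Z F a b = {\<omega> \<in> space M. quantile F a < ereal (Z \<omega>) \<and> ereal (Z \<omega>) \<le> quantile F b}"

end

theory Submission
  imports Defs
begin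
lemma quant_char:
  fixes F :: "real \<Rightarrow> real"
  assumes mono: "mono F" and cont: "continuous_on UNIV F"
    and bot: "(F \<longlongrightarrow> 0) at_bot" and top: "(F \<longlongrightarrow> 1) at_top"
    and u0: "0 \<le> u" and u1: "u \<le> 1"
  shows "({z. \<forall>x. u \<le> F x \<longrightarrow> z \<le> x} = UNIV \<and> u = 1) \<or>
         ({z. \<forall>x. u \<le> F x \<longrightarrow> z \<le> x} = {} \<and> u = 0) \<or>
         (\<exists>x0. {z. \<forall>x. u \<le> F x \<longrightarrow> z \<le> x} = {..x0} \<and> F x0 = u)"
proof (cases "\<forall>x. F x < u")
  case True
  have "\<forall>x. F x \<le> u" using True less_imp_le by blast
  then have "1 \<le> u"
    by (intro tendsto_upperbound[OF top] always_eventually) auto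
  then show ?thesis using True u1 by (auto simp: not_le[symmetric])
next
  case False
  then obtain x1 where x1: "u \<le> F x1" by (auto simp: not_less)
  show ?thesis
  proof (cases "\<forall>x. u \<le> F x")
    case True
    have "u \<le> 0"
      by (rule tendsto_lowerbound[OF bot]) (use True in auto)
    moreover have "{z. \<forall>x. u \<le> F x \<longrightarrow> z \<le> x} = {}"
    proof -
      { fix z assume "\<forall>x. u \<le> F x \<longrightarrow> z \<le> x"
        then have "z \<le> z - 1" using True by blast
        then have False by simp }
      then show ?thesis by blast
    qed
    ultimately show ?thesis using u0 by auto
  next
    case False
    then obtain x2 where x2: "F x2 < u" by (auto simp: not_le)
    define A where "A = {x. u \<le> F x}"
    have clA: "closed A" unfolding A_def
      by (rule closed_Collect_le) (use cont in \<open>auto intro: continuous_intros\<close>)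
    have bdd: "bdd_below A"
    proof
      fix x assume "x \<in> A"
      then have "u \<le> F x" by (simp add: A_def)
      show "x2 \<le> x"
      proof (rule ccontr)
        assume "\<not> x2 \<le> x"
        then have "F x \<le> F x2" using mono by (auto simp: mono_def)
        then show False using x2 \<open>u \<le> F x\<close> by simp
      qed
    qed
    have ne: "A \<noteq> {}" using x1 by (auto simp: A_def)
    define x0 where "x0 = Inf A"
    have x0A: "x0 \<in> A" unfolding x0_def by (rule closed_contains_Inf[OF ne bdd clA])
    have D: "{z. \<forall>x. u \<le> F x \<longrightarrow> z \<le> x} = {..x0}"
    proof (intro set_eqI iffI)
      fix z assume "z \<in> {z. \<forall>x. u \<le> F x \<longrightarrow> z \<le> x}"
      then show "z \<in> {..x0}" using x0A by (auto simp: A_def)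
    next
      fix z assume "z \<in> {..x0}"
      then show "z \<in> {z. \<forall>x. u \<le> F x \<longrightarrow> z \<le> x}"
        using cInf_lower[OF _ bdd] unfolding x0_def A_def by fastforce
    qed
    have lim: "(F \<longlongrightarrow> F x0) (at_left x0)"
      using cont by (meson UNIV_I continuous_on_def filterlim_at_split at_within_open open_UNIV)
    have "F x0 \<le> u"
    proof (rule tendsto_upperbound[OF lim])
      show "\<forall>\<^sub>F x in at_left x0. F x \<le> u"
      proof -
        have ev: "eventually (\<lambda>y. y \<in> {x0-1<..<x0}) (at_left x0)"
          by (rule eventually_at_left_real) simp
        have H: "\<forall>y\<in>{x0-1<..<x0}. F y \<le> u"
        proof
          fix y assume "y \<in> {x0-1<..<x0}"
          then have "y < x0" by simp
          then have "y \<notin> A" using cInf_lower[OF _ bdd] unfolding x0_def by fastforce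
          then show "F y \<le> u" by (simp add: A_def)
        qed
        show "\<forall>\<^sub>F y in at_left x0. F y \<le> u"
          using ev by (rule eventually_mono) (use H in blast)
      qed
    qed simp
    then show ?thesis using x0A D by (auto simp: A_def)
  qed
qed


lemma cdf_props:
  fixes M :: "'a measure" and X :: "'a \<Rightarrow> real" and F :: "real \<Rightarrow> real"
  assumes P: "prob_space M" and Xm: "X \<in> borel_measurable M"
    and Fd: "\<And>x. F x = measure M {\<omega> \<in> space M. X \<omega> \<le> x}"
  shows "mono F" "(F \<longlongrightarrow> 0) at_bot" "(F \<longlongrightarrow> 1) at_top"
proof -
  interpret prob_space M by fact
  interpret R: real_distribution "distr M borel X" using Xm by simp
  have eq: "F = cdf (distr M borel X)"
  proof
    fix x
    have "cdf (distr M borel X) x = measure M (X -` {..x} \<inter> space M)"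
      unfolding cdf_def by (rule measure_distr[OF Xm]) simp
    also have "X -` {..x} \<inter> space M = {\<omega> \<in> space M. X \<omega> \<le> x}" by auto
    finally show "F x = cdf (distr M borel X) x" using Fd by simp
  qed
  show "mono F" unfolding eq by (intro monoI R.cdf_nondecreasing)
  show "(F \<longlongrightarrow> 0) at_bot" unfolding eq by (rule R.cdf_lim_at_bot)
  show "(F \<longlongrightarrow> 1) at_top" unfolding eq by (rule R.cdf_lim_at_top_prob)
qed

lemma quantile_le_iff:
  "ereal z \<le> quantile F u \<longleftrightarrow> z \<in> {z. \<forall>x. u \<le> F x \<longrightarrow> z \<le> x}"
  unfolding quantile_def by (auto simp: le_Inf_iff)

lemma qevent_eq:
  "qevent M Z F a b = {\<omega>\<in>space M. Z \<omega> \<in> {z. \<forall>x. b \<le> F x \<longrightarrow> z \<le> x}}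
                      - {\<omega>\<in>space M. Z \<omega> \<in> {z. \<forall>x. a \<le> F x \<longrightarrow> z \<le> x}}"
  unfolding qevent_def using quantile_le_iff[of "Z _" F] by (auto simp: not_le[symmetric])

lemma rect_measure:
  assumes "finite_measure M" "E1 \<subseteq> E2" "K1 \<subseteq> K2"
    "E1 \<in> sets M" "E2 \<in> sets M" "K1 \<in> sets M" "K2 \<in> sets M"
  shows "measure M ((E2 - E1) \<inter> (K2 - K1)) =
    measure M (E2 \<inter> K2) - measure M (E2 \<inter> K1) - measure M (E1 \<inter> K2) + measure M (E1 \<inter> K1)"
proof -
  interpret finite_measure M by fact
  have "(E2 - E1) \<inter> (K2 - K1) = (E2 \<inter> K2 - E1 \<inter> K2) - (E2 \<inter> K1 - E1 \<inter> K1)"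
    using assms by blast
  also have "measure M \<dots> = measure M (E2 \<inter> K2 - E1 \<inter> K2) - measure M (E2 \<inter> K1 - E1 \<inter> K1)"
    by (rule finite_measure_Diff) (use assms in auto)
  also have "measure M (E2 \<inter> K2 - E1 \<inter> K2) = measure M (E2 \<inter> K2) - measure M (E1 \<inter> K2)"
    by (rule finite_measure_Diff) (use assms in auto)
  also have "measure M (E2 \<inter> K1 - E1 \<inter> K1) = measure M (E2 \<inter> K1) - measure M (E1 \<inter> K1)"
    by (rule finite_measure_Diff) (use assms in auto)
  finally show ?thesis by simp
qed


lemma marg:
  fixes M :: "'a measure" and X :: "'a \<Rightarrow> real" and F :: "real \<Rightarrow> real"
  assumes P: "prob_space M" and Xm: "X \<in> borel_measurable M"
    and Fd: "\<And>x. F x = measure M {\<omega> \<in> space M. X \<omega> \<le> x}"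
    and cont: "continuous_on UNIV F" and u: "0 \<le> u" "u \<le> 1"
  shows "{\<omega>\<in>space M. X \<omega> \<in> {z. \<forall>x. u \<le> F x \<longrightarrow> z \<le> x}} \<in> sets M"
    "measure M {\<omega>\<in>space M. X \<omega> \<in> {z. \<forall>x. u \<le> F x \<longrightarrow> z \<le> x}} = u"
proof -
  interpret prob_space M by fact
  note c = quant_char[OF cdf_props(1)[OF P Xm Fd] cont cdf_props(2,3)[OF P Xm Fd] u]
  define D where "D = {z. \<forall>x. u \<le> F x \<longrightarrow> z \<le> x}"
  have eqD: "{\<omega>\<in>space M. X \<omega> \<in> D} = X -` D \<inter> space M" by auto
  have "D \<in> sets borel" using c unfolding D_def[symmetric] by auto
  then show "{\<omega>\<in>space M. X \<omega> \<in> {z. \<forall>x. u \<le> F x \<longrightarrow> z \<le> x}} \<in> sets M"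
    unfolding D_def[symmetric] eqD using Xm by (rule measurable_sets[rotated])
  show "measure M {\<omega>\<in>space M. X \<omega> \<in> {z. \<forall>x. u \<le> F x \<longrightarrow> z \<le> x}} = u"
    unfolding D_def[symmetric]
  proof -
    from c[unfolded D_def[symmetric]] consider "D = UNIV" "u = 1" | "D = {}" "u = 0"
      | x0 where "D = {..x0}" "F x0 = u" by blast
    then show "measure M {\<omega>\<in>space M. X \<omega> \<in> D} = u"
    proof cases
      case 1 then show ?thesis by (simp add: prob_space)
    next
      case 2 then show ?thesis by simp
    next
      case 3 then show ?thesis using Fd[of x0] by simp
    qed
  qed
qed

lemma joint:
  fixes M :: "'a measure" and X Y :: "'a \<Rightarrow> real" and F G :: "real \<Rightarrow> real"
    and C :: "real \<Rightarrow> real \<Rightarrow> real"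
  assumes P: "prob_space M" and Xm: "X \<in> borel_measurable M" and Ym: "Y \<in> borel_measurable M"
    and Fd: "\<And>x. F x = measure M {\<omega> \<in> space M. X \<omega> \<le> x}"
    and Gd: "\<And>y. G y = measure M {\<omega> \<in> space M. Y \<omega> \<le> y}"
    and cF: "continuous_on UNIV F" and cG: "continuous_on UNIV G"
    and cop: "is_copula C"
    and H: "\<And>x y. measure M {\<omega> \<in> space M. X \<omega> \<le> x \<and> Y \<omega> \<le> y} = C (F x) (G y)"
    and u: "0 \<le> u" "u \<le> 1" and v: "0 \<le> v" "v \<le> 1"
  shows "measure M ({\<omega>\<in>space M. X \<omega> \<in> {z. \<forall>x. u \<le> F x \<longrightarrow> z \<le> x}}
                    \<inter> {\<omega>\<in>space M. Y \<omega> \<in> {z. \<forall>x. v \<le> G x \<longrightarrow> z \<le> x}}) = C u v"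
proof -
  interpret prob_space M by fact
  define D where "D = {z. \<forall>x. u \<le> F x \<longrightarrow> z \<le> x}"
  define D' where "D' = {z. \<forall>x. v \<le> G x \<longrightarrow> z \<le> x}"
  note cu = quant_char[OF cdf_props(1)[OF P Xm Fd] cF cdf_props(2,3)[OF P Xm Fd] u, unfolded D_def[symmetric]]
  note cv = quant_char[OF cdf_props(1)[OF P Ym Gd] cG cdf_props(2,3)[OF P Ym Gd] v, unfolded D'_def[symmetric]]
  note mu = marg[OF P Xm Fd cF u, unfolded D_def[symmetric]]
  note mv = marg[OF P Ym Gd cG v, unfolded D'_def[symmetric]]
  have cb: "\<And>w. w \<in> {0..1} \<Longrightarrow> C w 0 = 0 \<and> C 0 w = 0 \<and> C w 1 = w \<and> C 1 w = w"
    using cop unfolding is_copula_def by blast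
  have cbu: "C u 0 = 0" "C 0 u = 0" "C u 1 = u" "C 1 u = u" using cb[of u] u by auto
  have cbv: "C v 0 = 0" "C 0 v = 0" "C v 1 = v" "C 1 v = v" using cb[of v] v by auto
  show ?thesis unfolding D_def[symmetric] D'_def[symmetric]
  proof -
    from cu consider "D = UNIV" "u = 1" | "D = {}" "u = 0"
      | x0 where "D = {..x0}" "F x0 = u" by blast
    then show "measure M ({\<omega>\<in>space M. X \<omega> \<in> D} \<inter> {\<omega>\<in>space M. Y \<omega> \<in> D'}) = C u v"
    proof cases
      case 1
      then have "{\<omega>\<in>space M. X \<omega> \<in> D} \<inter> {\<omega>\<in>space M. Y \<omega> \<in> D'} = {\<omega>\<in>space M. Y \<omega> \<in> D'}"
        by auto
      then show ?thesis using mv cbv 1 by simp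
    next
      case 2 then show ?thesis using cbv by simp
    next
      case 3
      from cv consider "D' = UNIV" "v = 1" | "D' = {}" "v = 0"
        | y0 where "D' = {..y0}" "G y0 = v" by blast
      then show ?thesis
      proof cases
        case 1
        then have "{\<omega>\<in>space M. X \<omega> \<in> D} \<inter> {\<omega>\<in>space M. Y \<omega> \<in> D'} = {\<omega>\<in>space M. X \<omega> \<in> D}"
          by auto
        then show ?thesis using mu cbu 1 by simp
      next
        case 2 then show ?thesis using cbu by simp
      next
        case y: 3
        have "{\<omega>\<in>space M. X \<omega> \<in> D} \<inter> {\<omega>\<in>space M. Y \<omega> \<in> D'}
              = {\<omega> \<in> space M. X \<omega> \<le> x0 \<and> Y \<omega> \<le> y0}" using 3 y by auto
        then show ?thesis using H[of x0 y0] 3 y by simp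
      qed
    qed
  qed
qed

theorem proposition1:
  fixes M :: "'a measure" and X Y :: "'a \<Rightarrow> real"
    and F G :: "real \<Rightarrow> real" and C :: "real \<Rightarrow> real \<Rightarrow> real" and p q L :: real
  assumes "prob_space M"
    and "X \<in> borel_measurable M" and "Y \<in> borel_measurable M"
    and "\<And>x. F x = measure M {\<omega> \<in> space M. X \<omega> \<le> x}"
    and "\<And>y. G y = measure M {\<omega> \<in> space M. Y \<omega> \<le> y}"
    and "continuous_on UNIV F" and "continuous_on UNIV G"
    and "is_copula C"
    and "\<And>x y. measure M {\<omega> \<in> space M. X \<omega> \<le> x \<and> Y \<omega> \<le> y} = C (F x) (G y)"
    and "p \<in> {0..1}" and "q \<in> {0..1}"
  shows "(((\<lambda>t. cond_prob M (qevent M Y G (pos_part (q - t)) (neg_part (q + t)))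
                            (qevent M X F (pos_part (p - t)) (neg_part (p + t))))
            \<longlongrightarrow> L) (at_right 0)
          \<longleftrightarrow>
          ((\<lambda>t. C_volume C (pos_part (p - t)) (neg_part (p + t)) (pos_part (q - t)) (neg_part (q + t))
                / (neg_part (p + t) - pos_part (p - t))) \<longlongrightarrow> L) (at_right 0))
       \<and> (((\<lambda>t. cond_prob M (qevent M X F (pos_part (p - t)) (neg_part (p + t)))
                            (qevent M Y G (pos_part (q - t)) (neg_part (q + t))))
            \<longlongrightarrow> L) (at_right 0)
          \<longleftrightarrow>
          ((\<lambda>t. C_volume C (pos_part (p - t)) (neg_part (p + t)) (pos_part (q - t)) (neg_part (q + t))
                / (neg_part (q + t) - pos_part (q - t))) \<longlongrightarrow> L) (at_right 0))"
proof -
  note A = assms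
  interpret prob_space M by fact
  define SX where "SX u = {\<omega>\<in>space M. X \<omega> \<in> {z. \<forall>x. u \<le> F x \<longrightarrow> z \<le> x}}" for u
  define SY where "SY v = {\<omega>\<in>space M. Y \<omega> \<in> {z. \<forall>x. v \<le> G x \<longrightarrow> z \<le> x}}" for v
  have key: "cond_prob M (qevent M Y G a' b') (qevent M X F a b) = C_volume C a b a' b' / (b - a)
           \<and> cond_prob M (qevent M X F a b) (qevent M Y G a' b') = C_volume C a b a' b' / (b' - a')"
    if ab: "0 \<le> a" "a \<le> b" "b \<le> 1" and ab': "0 \<le> a'" "a' \<le> b'" "b' \<le> 1" for a b a' b'
  proof -
    have sX: "SX w \<in> sets M" "measure M (SX w) = w" if "0 \<le> w" "w \<le> 1" for w
      using marg[OF A(1,2,4,6) that] unfolding SX_def by auto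
    have sY: "SY w \<in> sets M" "measure M (SY w) = w" if "0 \<le> w" "w \<le> 1" for w
      using marg[OF A(1,3,5,7) that] unfolding SY_def by auto
    have j: "measure M (SX w \<inter> SY w') = C w w'" if "0 \<le> w" "w \<le> 1" "0 \<le> w'" "w' \<le> 1" for w w'
      using joint[OF A(1-9) that] unfolding SX_def SY_def by auto
    have subX: "SX a \<subseteq> SX b" unfolding SX_def using ab by force
    have subY: "SY a' \<subseteq> SY b'" unfolding SY_def using ab' by force
    have qX: "qevent M X F a b = SX b - SX a" unfolding qevent_eq SX_def ..
    have qY: "qevent M Y G a' b' = SY b' - SY a'" unfolding qevent_eq SY_def ..
    have mX: "measure M (SX b - SX a) = b - a"
      using finite_measure_Diff[of "SX b" "SX a"] sX ab subX by auto
    have mY: "measure M (SY b' - SY a') = b' - a'"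
      using finite_measure_Diff[of "SY b'" "SY a'"] sY ab' subY by auto
    have r: "measure M ((SX b - SX a) \<inter> (SY b' - SY a')) = C_volume C a b a' b'"
      unfolding C_volume_def
      using rect_measure[OF finite_measure_axioms subX subY] sX sY j ab ab' by simp
    show ?thesis unfolding cond_prob_def qX qY mX mY
      using r by (simp add: Int_commute)
  qed
  have ev: "\<forall>\<^sub>F t in at_right (0::real). 
      cond_prob M (qevent M Y G (pos_part (q - t)) (neg_part (q + t)))
                            (qevent M X F (pos_part (p - t)) (neg_part (p + t))) =
      C_volume C (pos_part (p - t)) (neg_part (p + t)) (pos_part (q - t)) (neg_part (q + t))
                / (neg_part (p + t) - pos_part (p - t)) \<and>
      cond_prob M (qevent M X F (pos_part (p - t)) (neg_part (p + t)))
                            (qevent M Y G (pos_part (q - t)) (neg_part (q + t))) =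
      C_volume C (pos_part (p - t)) (neg_part (p + t)) (pos_part (q - t)) (neg_part (q + t))
                / (neg_part (q + t) - pos_part (q - t))"
  proof (rule eventually_mono[OF eventually_at_right_less], rule key)
    fix t :: real assume "0 < t"
    then show "0 \<le> pos_part (p - t)" "pos_part (p - t) \<le> neg_part (p + t)" "neg_part (p + t) \<le> 1"
      "0 \<le> pos_part (q - t)" "pos_part (q - t) \<le> neg_part (q + t)" "neg_part (q + t) \<le> 1"
      using A(10,11) by (auto simp: pos_part_def neg_part_def)
  qed
  show ?thesis
    by (intro conjI tendsto_cong; rule eventually_mono[OF ev]; simp)
qed

end
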